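(* Let $m$ be a positive integer and let $S_1,\dots,S_{k-1}$ be pairwise disjoint subsets of $\mathbb{F}_2^m$, and let $d=\dim(\bigcup_iS_i)$. Then $\langle\mathcal{X}^4_{\overline{(S_1,\dots,S_{k-1})}}\rangle\le 2^{2dm+8d^2}B^{2^{d+2}}$, where $B=\max_{i,\epsilon,z}|\mathcal{X}^{(i)}(\epsilon,z)|$.
   Context: Consider a BMS channel with finitely many noise levels: for each input bit $X_x$, the channel independently draws $\epsilon_x\in[0,1/2]$ from a fixed distribution with finite support, draws $Z_x\in\mathbb{F}_2$ equal to $1$ with probability $\epsilon_x$, and outputs $(\epsilon_x,X_x+Z_x)$. Let $k$ be the number of possible pairs $(\epsilon_x,Z_x)$ and $\nu$ their joint distribution. Let $\mathcal{X}^{(0)},\dots,\mathcal{X}^{(k-1)}$ be functions from these pairs to $\mathbb{R}$ that are orthonormal in $L^2(\nu)$, with $\mathcal{X}^{(0)}\equiv1$. For pairwise disjoint $S_1,\dots,S_{k-1}\subseteq\mathbb{F}_2^m$, $\mathcal{X}_{(S_1,\dots,S_{k-1})}(\epsilon,Z)=\prod_{i=1}^{k-1}\prod_{x\in S_i}\mathcal{X}^{(i)}(\epsilon_x,Z_x)$, a function of $(\epsilon_x,Z_x)_{x\in\mathbb{F}_2^m}$. $\langle g\rangle$ is the expectation of $g$ when $(\epsilon_x,Z_x)_{x\in\mathbb{F}_2^m}$ are i.i.d. with law $\nu$. $\overline{(S_1,\dots,S_{k-1})}$ is the set of distinct tuples $(\pi(S_1),\dots,\pi(S_{k-1}))$ over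 invertible linear maps $\pi$ of $\mathbb{F}_2^m$, and $\mathcal{X}_{\overline{(S_1,\dots,S_{k-1})}}$ is the sum of $\mathcal{X}_{T}$ over tuples $T$ in this set. $\dim$ denotes the dimension of the linear span in $\mathbb{F}_2^m$. *)

theory Defs
  imports "HOL-Analysis.Analysis" "HOL-Probability.Probability" "HOL-Library.Z2"
begin

text \<open>F_2^m is modelled as bit^'n with m = CARD('n). Noise pairs (epsilon, Z) are
  elements of real \<times> bool (Z = True meaning Z = 1).\<close>

definition BMS_channel :: "(real \<times> bool) pmf \<Rightarrow> bool" where
  "BMS_channel \<nu> \<longleftrightarrow> (\<exists>\<mu>::real pmf. finite (set_pmf \<mu>) \<and> set_pmf \<mu> \<subseteq> {0..1/2} \<and>
      \<nu> = bind_pmf \<mu> (\<lambda>e. map_pmf (\<lambda>z. (e, z)) (bernoulli_pmf e)))"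

definition chiS :: "(nat \<Rightarrow> real \<times> bool \<Rightarrow> real) \<Rightarrow> nat \<Rightarrow> (nat \<Rightarrow> (bit^'n) set)
    \<Rightarrow> ((bit^'n) \<Rightarrow> real \<times> bool) \<Rightarrow> real" where
  "chiS X k S \<omega> = (\<Prod>i\<in>{1..<k}. \<Prod>x\<in>S i. X i (\<omega> x))"

definition linear_auts :: "((bit^'n) \<Rightarrow> (bit^'n)) set" where
  "linear_auts = {\<pi>. Vector_Spaces.linear (*s) (*s) \<pi> \<and> bij \<pi>}"

definition orbit :: "nat \<Rightarrow> (nat \<Rightarrow> (bit^'n) set) \<Rightarrow> (nat \<Rightarrow> (bit^'n) set) set" where
  "orbit k S = {restrict (\<lambda>i. \<pi> ` S i) {1..<k} | \<pi>. \<pi> \<in> linear_auts}"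

definition chi_orbit :: "(nat \<Rightarrow> real \<times> bool \<Rightarrow> real) \<Rightarrow> nat \<Rightarrow> (nat \<Rightarrow> (bit^'n) set)
    \<Rightarrow> ((bit^'n) \<Rightarrow> real \<times> bool) \<Rightarrow> real" where
  "chi_orbit X k S \<omega> = (\<Sum>T\<in>orbit k S. chiS X k T \<omega>)"

definition avg :: "(real \<times> bool) pmf \<Rightarrow> (((bit^'n) \<Rightarrow> real \<times> bool) \<Rightarrow> real) \<Rightarrow> real" where
  "avg \<nu> g = measure_pmf.expectation (Pi_pmf UNIV undefined (\<lambda>_. \<nu>)) g"

end

theory Submission
  imports Defs
begin

lemma vdim_union_le:
  fixes A B :: "('a::field^'n) set"
  shows "vec.dim (A \<union> B) \<le> vec.dim A + vec.dim B"
proof -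
  obtain bA where bA: "bA \<subseteq> A" "vec.independent bA" "A \<subseteq> vec.span bA" "card bA = vec.dim A"
    using vec.basis_exists by blast
  obtain bB where bB: "bB \<subseteq> B" "vec.independent bB" "B \<subseteq> vec.span bB" "card bB = vec.dim B"
    using vec.basis_exists by blast
  have fin: "finite bA" "finite bB" using bA(2) bB(2) vec.finiteI_independent by auto
  have "A \<union> B \<subseteq> vec.span (bA \<union> bB)"
    using bA(3) bB(3) vec.span_mono[of bA "bA \<union> bB"] vec.span_mono[of bB "bA \<union> bB"] by blast
  then have "vec.dim (A \<union> B) \<le> card (bA \<union> bB)"
    by (rule vec.dim_le_card) (use fin in auto)
  also have "\<dots> \<le> card bA + card bB" by (rule card_Un_le)
  finally show ?thesis using bA(4) bB(4) by simp
qed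

lemma vdim_modular:
  fixes A B :: "('a::field^'n) set"
  shows "vec.dim (A \<union> B) + vec.dim (vec.span A \<inter> vec.span B) = vec.dim A + vec.dim B"
proof -
  have "vec.dim {x + y |x y. x \<in> vec.span A \<and> y \<in> vec.span B} + vec.dim (vec.span A \<inter> vec.span B)
      = vec.dim (vec.span A) + vec.dim (vec.span B)"
    by (rule vec.dim_sums_Int) (auto intro: vec.subspace_span)
  moreover have "{x + y |x y. x \<in> vec.span A \<and> y \<in> vec.span B} = vec.span (A \<union> B)"
    by (simp add: vec.span_Un)
  ultimately show ?thesis by simp
qed

lemma dim_key:
  fixes P1 P2 P3 P4 :: "('a::field^'n) set"
  assumes d: "vec.dim P1 \<le> d" "vec.dim P2 \<le> d" "vec.dim P3 \<le> d" "vec.dim P4 \<le> d"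
    and c1: "\<And>x. x \<in> P1 \<Longrightarrow> x \<in> P2 \<union> P3 \<union> P4"
    and c2: "\<And>x. x \<in> P2 \<Longrightarrow> x \<in> P1 \<union> P3 \<union> P4"
    and c3: "\<And>x. x \<in> P3 \<Longrightarrow> x \<in> P1 \<union> P2 \<union> P4"
    and c4: "\<And>x. x \<in> P4 \<Longrightarrow> x \<in> P1 \<union> P2 \<union> P3"
  shows "vec.dim (P1 \<union> P2 \<union> P3 \<union> P4) \<le> 2 * d"
proof -
  let ?Z = "P1 \<union> P2 \<union> P3 \<union> P4"
  let ?I12 = "vec.span P1 \<inter> vec.span P2"
  let ?I34 = "vec.span P3 \<inter> vec.span P4"
  have "?Z \<subseteq> vec.span ((P1 \<union> P2) \<union> ?I34)"
  proof
    fix x assume "x \<in> ?Z"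
    then have "x \<in> (P1 \<union> P2) \<union> ?I34"
      using c3 c4 vec.span_base by blast
    then show "x \<in> vec.span ((P1 \<union> P2) \<union> ?I34)" by (rule vec.span_base)
  qed
  then have "vec.dim ?Z \<le> vec.dim ((P1 \<union> P2) \<union> ?I34)" by (rule vec.dim_mono)
  also have "\<dots> \<le> vec.dim (P1 \<union> P2) + vec.dim ?I34" by (rule vdim_union_le)
  finally have A: "vec.dim ?Z \<le> vec.dim (P1 \<union> P2) + vec.dim ?I34" .
  have "?Z \<subseteq> vec.span ((P3 \<union> P4) \<union> ?I12)"
  proof
    fix x assume "x \<in> ?Z"
    then have "x \<in> (P3 \<union> P4) \<union> ?I12"
      using c1 c2 vec.span_base by blast
    then show "x \<in> vec.span ((P3 \<union> P4) \<union> ?I12)" by (rule vec.span_base)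
  qed
  then have "vec.dim ?Z \<le> vec.dim ((P3 \<union> P4) \<union> ?I12)" by (rule vec.dim_mono)
  also have "\<dots> \<le> vec.dim (P3 \<union> P4) + vec.dim ?I12" by (rule vdim_union_le)
  finally have B: "vec.dim ?Z \<le> vec.dim (P3 \<union> P4) + vec.dim ?I12" .
  have M1: "vec.dim (P1 \<union> P2) + vec.dim ?I12 = vec.dim P1 + vec.dim P2" by (rule vdim_modular)
  have M2: "vec.dim (P3 \<union> P4) + vec.dim ?I34 = vec.dim P3 + vec.dim P4" by (rule vdim_modular)
  show ?thesis using A B M1 M2 d by linarith
qed
lemma UNIV_bit: "(UNIV :: bit set) = {0, 1}" using bit.exhaust by blast

instance bit :: finite
  by standard (simp add: UNIV_bit)

lemma card_bit: "card (UNIV :: bit set) = 2"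
  unfolding UNIV_bit by simp

lemma card_span_le:
  fixes A :: "(bit^'n) set"
  assumes fA: "finite A"
  shows "card (vec.span A) \<le> 2 ^ card A"
proof -
  have "vec.span A = (\<lambda>u. \<Sum>v\<in>A. u v *s v) ` (A \<rightarrow>\<^sub>E (UNIV::bit set))"
  proof -
    have "vec.span A = range (\<lambda>u. \<Sum>v\<in>A. u v *s v)" by (rule vec.span_finite[OF fA])
    also have "\<dots> = (\<lambda>u. \<Sum>v\<in>A. u v *s v) ` (A \<rightarrow>\<^sub>E (UNIV::bit set))"
    proof
      show "range (\<lambda>u. \<Sum>v\<in>A. u v *s v) \<subseteq> (\<lambda>u. \<Sum>v\<in>A. u v *s v) ` (A \<rightarrow>\<^sub>E UNIV)"
      proof
        fix y assume "y \<in> range (\<lambda>u. \<Sum>v\<in>A. u v *s v)"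
        then obtain u where y: "y = (\<Sum>v\<in>A. u v *s v)" by blast
        have "y = (\<Sum>v\<in>A. restrict u A v *s v)" unfolding y by (intro sum.cong) auto
        moreover have "restrict u A \<in> A \<rightarrow>\<^sub>E UNIV" by auto
        ultimately show "y \<in> (\<lambda>u. \<Sum>v\<in>A. u v *s v) ` (A \<rightarrow>\<^sub>E UNIV)" by blast
      qed
    next
      show "(\<lambda>u. \<Sum>v\<in>A. u v *s v) ` (A \<rightarrow>\<^sub>E UNIV) \<subseteq> range (\<lambda>u. \<Sum>v\<in>A. u v *s v)"
        by (rule image_subsetI) (rule rangeI)
    qed
    finally show ?thesis .
  qed
  then have "card (vec.span A) = card ((\<lambda>u. \<Sum>v\<in>A. u v *s v) ` (A \<rightarrow>\<^sub>E (UNIV::bit set)))"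
    by simp
  also have "\<dots> \<le> card (A \<rightarrow>\<^sub>E (UNIV::bit set))"
    by (rule card_image_le) (simp add: finite_PiE fA)
  also have "\<dots> = 2 ^ card A" by (simp add: card_PiE fA card_bit)
  finally show ?thesis .
qed

lemma linear_span_image:
  assumes "Vector_Spaces.linear (*s) (*s) (\<pi> :: ('a::field^'n) \<Rightarrow> ('a^'n))"
  shows "vec.span (\<pi> ` A) = \<pi> ` vec.span A"
proof -
  interpret l: Vector_Spaces.linear "(*s)" "(*s)" \<pi> by (rule assms)
  show ?thesis by (rule l.span_image)
qed

definition supp :: "nat \<Rightarrow> (nat \<Rightarrow> 'a set) \<Rightarrow> 'a set" where
  "supp k T = (\<Union>i\<in>{1..<k}. T i)"

definition good :: "nat \<Rightarrow> (nat \<Rightarrow> 'a set) \<Rightarrow> (nat \<Rightarrow> 'a set) \<Rightarrow> (nat \<Rightarrow> 'a set) \<Rightarrow> (nat \<Rightarrow> 'a set) \<Rightarrow> bool" where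
  "good k T1 T2 T3 T4 \<longleftrightarrow> supp k T1 \<subseteq> supp k T2 \<union> supp k T3 \<union> supp k T4 \<and>
     supp k T2 \<subseteq> supp k T1 \<union> supp k T3 \<union> supp k T4 \<and>
     supp k T3 \<subseteq> supp k T1 \<union> supp k T2 \<union> supp k T4 \<and>
     supp k T4 \<subseteq> supp k T1 \<union> supp k T2 \<union> supp k T3"

definition pi_of :: "nat \<Rightarrow> (nat \<Rightarrow> (bit^'n) set) \<Rightarrow> (nat \<Rightarrow> (bit^'n) set) \<Rightarrow> ((bit^'n) \<Rightarrow> (bit^'n))" where
  "pi_of k S T = (SOME \<pi>. \<pi> \<in> linear_auts \<and> T = restrict (\<lambda>i. \<pi> ` S i) {1..<k})"

lemma pi_of:
  assumes "T \<in> orbit k S"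
  shows "pi_of k S T \<in> linear_auts" "T = restrict (\<lambda>i. pi_of k S T ` S i) {1..<k}"
proof -
  have "\<exists>\<pi>. \<pi> \<in> linear_auts \<and> T = restrict (\<lambda>i. \<pi> ` S i) {1..<k}"
    using assms by (auto simp: orbit_def)
  then have "pi_of k S T \<in> linear_auts \<and> T = restrict (\<lambda>i. pi_of k S T ` S i) {1..<k}"
    unfolding pi_of_def by (rule someI_ex)
  then show "pi_of k S T \<in> linear_auts" "T = restrict (\<lambda>i. pi_of k S T ` S i) {1..<k}" by auto
qed

lemma supp_orbit:
  assumes "T \<in> orbit k S"
  shows "supp k T = pi_of k S T ` (\<Union>i\<in>{1..<k}. S i)"
proof -
  have "supp k T = (\<Union>i\<in>{1..<k}. restrict (\<lambda>i. pi_of k S T ` S i) {1..<k} i)"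
    unfolding supp_def using pi_of(2)[OF assms] by simp
  also have "\<dots> = pi_of k S T ` (\<Union>i\<in>{1..<k}. S i)" by auto
  finally show ?thesis .
qed

lemma linear_pi_of:
  assumes "T \<in> orbit k S"
  shows "Vector_Spaces.linear (*s) (*s) (pi_of k S T)"
  using pi_of(1)[OF assms] by (simp add: linear_auts_def)

lemma orbit_eqI:
  assumes "T \<in> orbit k S" "T' \<in> orbit k S"
    and b: "(\<Union>i\<in>{1..<k}. S i) \<subseteq> vec.span b"
    and eq: "\<And>v. v \<in> b \<Longrightarrow> pi_of k S T v = pi_of k S T' v"
  shows "T = T'"
proof -
  have "pi_of k S T x = pi_of k S T' x" if "x \<in> vec.span b" for x
    by (rule vec.linear_eq_on[OF linear_pi_of[OF assms(1)] linear_pi_of[OF assms(2)] that eq])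
  then have "\<And>i. i \<in> {1..<k} \<Longrightarrow> pi_of k S T ` S i = pi_of k S T' ` S i"
    using b by (intro image_cong refl) blast
  then have "restrict (\<lambda>i. pi_of k S T ` S i) {1..<k} = restrict (\<lambda>i. pi_of k S T' ` S i) {1..<k}"
    by (intro restrict_ext) auto
  then show ?thesis using pi_of(2)[OF assms(1)] pi_of(2)[OF assms(2)] by simp
qed



lemma finite_orbit: "finite (orbit k (S :: nat \<Rightarrow> (bit^'n) set))"
proof -
  have "orbit k S = (\<lambda>\<pi>. restrict (\<lambda>i. \<pi> ` S i) {1..<k}) ` linear_auts"
    unfolding orbit_def by auto
  then show ?thesis by simp
qed

lemma dim_image_le:
  fixes \<pi> :: "(bit^'n) \<Rightarrow> (bit^'n)"
  assumes lin: "Vector_Spaces.linear (*s) (*s) \<pi>" and U: "U \<subseteq> vec.span b" and finb: "finite b"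
  shows "vec.dim (\<pi> ` U) \<le> card b"
proof -
  have "\<pi> ` U \<subseteq> \<pi> ` vec.span b" using U by blast
  also have "\<dots> = vec.span (\<pi> ` b)" using linear_span_image[OF lin] by simp
  finally have "vec.dim (\<pi> ` U) \<le> card (\<pi> ` b)" by (rule vec.dim_le_card) (use finb in simp)
  also have "\<dots> \<le> card b" by (rule card_image_le[OF finb])
  finally show ?thesis .
qed

lemma count_good:
  fixes S :: "nat \<Rightarrow> (bit^'n) set" and k :: nat
  defines "U \<equiv> \<Union>i\<in>{1..<k}. S i" and "Orb \<equiv> orbit k S"
  defines "d \<equiv> vec.dim U" and "m \<equiv> CARD('n)"
  shows "card {(T1,T2,T3,T4). T1 \<in> Orb \<and> T2 \<in> Orb \<and> T3 \<in> Orb \<and> T4 \<in> Orb \<and> good k T1 T2 T3 T4}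
           \<le> 2^(2*d*m + 8*d^2)"
proof -
  let ?G = "{(T1,T2,T3,T4). T1 \<in> Orb \<and> T2 \<in> Orb \<and> T3 \<in> Orb \<and> T4 \<in> Orb \<and> good k T1 T2 T3 T4}"
  obtain b where b: "b \<subseteq> U" "vec.independent b" "U \<subseteq> vec.span b" "card b = d"
    using vec.basis_exists unfolding d_def by blast
  have finb: "finite b" using b(2) vec.finiteI_independent by blast
  have finOrb: "finite Orb" unfolding Orb_def by (rule finite_orbit)
  define CS where "CS = ({..<2*d} \<rightarrow>\<^sub>E (UNIV :: (bit^'n) set))"
  define VC where "VC C = vec.span (C ` {..<2*d})" for C :: "nat \<Rightarrow> bit^'n"
  define OC where "OC C = {T \<in> Orb. pi_of k S T ` b \<subseteq> VC C}" for C
  define \<phi> where "\<phi> T = restrict (pi_of k S T) b" for T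
  have cardVC: "card (VC C) \<le> 2^(2*d)" for C
  proof -
    have "card (VC C) \<le> 2 ^ card (C ` {..<2*d})" unfolding VC_def by (rule card_span_le) simp
    also have "\<dots> \<le> 2^(2*d)"
      by (rule power_increasing) (auto intro: card_image_le[THEN order_trans])
    finally show ?thesis .
  qed
  have cardOC: "card (OC C) \<le> 2^(2*d*d)" for C
  proof -
    have inj: "inj_on \<phi> (OC C)"
    proof (rule inj_onI)
      fix T T' assume T: "T \<in> OC C" "T' \<in> OC C" and e: "\<phi> T = \<phi> T'"
      have "pi_of k S T v = pi_of k S T' v" if "v \<in> b" for v
        using fun_cong[OF e, of v] that unfolding \<phi>_def by simp
      then show "T = T'"
        using orbit_eqI[of T k S T' b] T b(3) unfolding OC_def Orb_def U_def by auto
    qed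
    have img: "\<phi> ` OC C \<subseteq> b \<rightarrow>\<^sub>E VC C" unfolding \<phi>_def OC_def by auto
    have "card (OC C) = card (\<phi> ` OC C)" using inj by (simp add: card_image)
    also have "\<dots> \<le> card (b \<rightarrow>\<^sub>E VC C)"
      by (rule card_mono[OF _ img]) (simp add: finite_PiE finb)
    also have "\<dots> = card (VC C) ^ card b" by (simp add: card_PiE finb)
    also have "\<dots> \<le> (2^(2*d)) ^ d" using cardVC b(4) by (simp add: power_mono)
    also have "\<dots> = 2^(2*d*d)" by (simp add: power_mult)
    finally show ?thesis .
  qed
  have sub: "?G \<subseteq> (\<Union>C\<in>CS. OC C \<times> OC C \<times> OC C \<times> OC C)"
  proof
    fix q assume "q \<in> ?G"
    then obtain T1 T2 T3 T4 where q: "q = (T1,T2,T3,T4)" and T: "T1 \<in> Orb" "T2 \<in> Orb" "T3 \<in> Orb" "T4 \<in> Orb"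
      and g: "good k T1 T2 T3 T4" by auto
    define P where "P T = pi_of k S T ` U" for T
    have suppP: "supp k T = P T" if "T \<in> Orb" for T
      using supp_orbit[of T k S] that unfolding P_def U_def Orb_def by simp
    have dimP: "vec.dim (P T) \<le> d" if "T \<in> Orb" for T
      using dim_image_le[OF linear_pi_of b(3) finb, of T k S] that b(4) unfolding P_def Orb_def by simp
    have cov: "P T1 \<subseteq> P T2 \<union> P T3 \<union> P T4" "P T2 \<subseteq> P T1 \<union> P T3 \<union> P T4"
       "P T3 \<subseteq> P T1 \<union> P T2 \<union> P T4" "P T4 \<subseteq> P T1 \<union> P T2 \<union> P T3"
      using g T suppP unfolding good_def by auto
    let ?Z = "P T1 \<union> P T2 \<union> P T3 \<union> P T4"
    have dZ: "vec.dim ?Z \<le> 2 * d"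
      by (rule dim_key[OF dimP[OF T(1)] dimP[OF T(2)] dimP[OF T(3)] dimP[OF T(4)]])
         (use cov in blast)+
    obtain c where c: "c \<subseteq> ?Z" "vec.independent c" "?Z \<subseteq> vec.span c" "card c = vec.dim ?Z"
      using vec.basis_exists by blast
    have finc: "finite c" using c(2) vec.finiteI_independent by blast
    obtain cs where cs: "set cs = c" "distinct cs" using finite_distinct_list[OF finc] by blast
    have lcs: "length cs \<le> 2 * d" using cs c(4) dZ distinct_card by fastforce
    define C where "C = restrict (\<lambda>i. if i < length cs then cs ! i else 0) {..<2*d}"
    have CCS: "C \<in> CS" unfolding C_def CS_def by auto
    have cC: "c \<subseteq> C ` {..<2*d}"
    proof
      fix x assume "x \<in> c"
      then obtain i where i: "i < length cs" "x = cs ! i" using cs(1) by (metis in_set_conv_nth)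
      then have "C i = x" "i \<in> {..<2*d}" using lcs unfolding C_def by auto
      then show "x \<in> C ` {..<2*d}" by blast
    qed
    have ZV: "?Z \<subseteq> VC C"
      using c(3) vec.span_mono[OF cC] unfolding VC_def by blast
    have "T \<in> OC C" if "T \<in> {T1,T2,T3,T4}" for T
    proof -
      have "pi_of k S T ` b \<subseteq> P T" unfolding P_def using b(1) by blast
      also have "P T \<subseteq> ?Z" using that by blast
      finally show ?thesis using ZV that T unfolding OC_def by blast
    qed
    then show "q \<in> (\<Union>C\<in>CS. OC C \<times> OC C \<times> OC C \<times> OC C)" using CCS q by blast
  qed
  have finCS: "finite CS" unfolding CS_def by (simp add: finite_PiE)
  have finOC: "finite (OC C)" for C using finOrb unfolding OC_def by simp
  have "card ?G \<le> card (\<Union>C\<in>CS. OC C \<times> OC C \<times> OC C \<times> OC C)"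
    by (rule card_mono[OF _ sub]) (use finCS finOC in auto)
  also have "\<dots> \<le> (\<Sum>C\<in>CS. card (OC C \<times> OC C \<times> OC C \<times> OC C))"
    by (rule card_UN_le[OF finCS])
  also have "\<dots> = (\<Sum>C\<in>CS. card (OC C) ^ 4)"
    by (simp add: card_cartesian_product power4_eq_xxxx mult.assoc)
  also have "\<dots> \<le> (\<Sum>C\<in>CS. (2^(2*d*d)) ^ 4)"
    by (intro sum_mono power_mono cardOC) simp
  also have "\<dots> = card CS * (2^(2*d*d)) ^ 4" by simp
  also have "card CS = (2^m) ^ (2*d)"
    unfolding CS_def m_def by (simp add: card_PiE card_bit)
  also have "(2^m) ^ (2*d) * (2^(2*d*d)) ^ 4 = (2::nat)^(2*d*m + 8*d^2)"
    by (simp add: power_mult[symmetric] power_add[symmetric] power2_eq_square algebra_simps)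
  finally show ?thesis .
qed



definition disj :: "nat \<Rightarrow> (nat \<Rightarrow> 'a set) \<Rightarrow> bool" where
  "disj k T \<longleftrightarrow> (\<forall>i\<in>{1..<k}. \<forall>j\<in>{1..<k}. i \<noteq> j \<longrightarrow> T i \<inter> T j = {})"

definition lab :: "nat \<Rightarrow> (nat \<Rightarrow> 'a set) \<Rightarrow> 'a \<Rightarrow> nat" where
  "lab k T x = (if x \<in> supp k T then (THE i. i \<in> {1..<k} \<and> x \<in> T i) else 0)"

lemma lab_in:
  assumes "disj k T" "i \<in> {1..<k}" "x \<in> T i"
  shows "lab k T x = i"
proof -
  have "x \<in> supp k T" using assms unfolding supp_def by blast
  moreover have "(THE i. i \<in> {1..<k} \<and> x \<in> T i) = i"
  proof (rule the_equality)
    fix j assume j: "j \<in> {1..<k} \<and> x \<in> T j"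
    show "j = i"
    proof (rule ccontr)
      assume "j \<noteq> i"
      then have "T j \<inter> T i = {}" using assms(1,2) j unfolding disj_def by blast
      then show False using j assms(3) by blast
    qed
  qed (use assms in auto)
  ultimately show ?thesis unfolding lab_def by simp
qed

lemma lab_out: "x \<notin> supp k T \<Longrightarrow> lab k T x = 0"
  unfolding lab_def by simp

lemma lab_supp:
  assumes "disj k T" "x \<in> supp k T"
  shows "lab k T x \<in> {1..<k}"
proof -
  obtain i where "i \<in> {1..<k}" "x \<in> T i" using assms(2) unfolding supp_def by blast
  then show ?thesis using lab_in[OF assms(1)] by simp
qed

lemma lab_nz:
  assumes "disj k T"
  shows "lab k T x \<noteq> 0 \<longleftrightarrow> x \<in> supp k T"
  using lab_supp[OF assms] lab_out by fastforce

lemma lab_lt: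
  assumes "disj k T" "0 < k"
  shows "lab k T x < k"
  using lab_supp[OF assms(1), of x] lab_out[of x k T] assms(2) by (cases "x \<in> supp k T") auto

lemma chiS_lab:
  fixes T :: "nat \<Rightarrow> (bit^'n) set"
  assumes d: "disj k T" and X0: "X 0 = (\<lambda>_. 1)"
  shows "chiS X k T \<omega> = (\<Prod>x\<in>UNIV. X (lab k T x) (\<omega> x))"
proof -
  have "chiS X k T \<omega> = (\<Prod>i\<in>{1..<k}. \<Prod>x\<in>T i. X (lab k T x) (\<omega> x))"
    unfolding chiS_def by (intro prod.cong refl) (simp add: lab_in[OF d])
  also have "\<dots> = (\<Prod>x\<in>(\<Union>i\<in>{1..<k}. T i). X (lab k T x) (\<omega> x))"
    by (rule prod.UNION_disjoint[symmetric]) (use d in \<open>auto simp: disj_def\<close>)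
  also have "\<dots> = (\<Prod>x\<in>UNIV. X (lab k T x) (\<omega> x))"
    by (rule prod.mono_neutral_left) (auto simp: lab_out supp_def X0)
  finally show ?thesis .
qed

lemma orbit_disj:
  assumes "\<forall>i\<in>{1..<k}. \<forall>j\<in>{1..<k}. i \<noteq> j \<longrightarrow> S i \<inter> S j = {}"
    and T: "T \<in> orbit k (S :: nat \<Rightarrow> (bit^'n) set)"
  shows "disj k T"
proof -
  have inj: "inj (pi_of k S T)" using pi_of(1)[OF T] by (simp add: linear_auts_def bij_is_inj)
  have "T i = pi_of k S T ` S i" if "i \<in> {1..<k}" for i
    using pi_of(2)[OF T] that by (metis restrict_apply')
  then show ?thesis using assms(1) unfolding disj_def
    by (metis image_Int[OF inj] image_empty)
qed

lemma exp_abs_le: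
  fixes f :: "'a \<Rightarrow> real"
  assumes fin: "finite (set_pmf M)" and b: "\<And>p. p \<in> set_pmf M \<Longrightarrow> \<bar>f p\<bar> \<le> C"
  shows "\<bar>measure_pmf.expectation M f\<bar> \<le> C"
proof -
  have "\<bar>measure_pmf.expectation M f\<bar> \<le> measure_pmf.expectation M (\<lambda>p. \<bar>f p\<bar>)"
    by (rule integral_abs_bound)
  also have "\<dots> \<le> measure_pmf.expectation M (\<lambda>p. C)"
    by (rule integral_mono_AE) (use fin b in \<open>auto intro: integrable_measure_pmf_finite AE_pmfI\<close>)
  also have "\<dots> = C" by simp
  finally show ?thesis .
qed



lemma exp_prod_Pi_pmf_signed:
  fixes f :: "'a::finite \<Rightarrow> 'b \<Rightarrow> real"
  assumes fin: "\<And>x. finite (set_pmf (p x))"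
  shows "measure_pmf.expectation (Pi_pmf UNIV dflt p) (\<lambda>\<omega>. \<Prod>x\<in>UNIV. f x (\<omega> x))
       = (\<Prod>x\<in>UNIV. measure_pmf.expectation (p x) (f x))"
proof -
  have set: "set_pmf (Pi_pmf UNIV dflt p) = PiE UNIV (\<lambda>x. set_pmf (p x))"
    by (auto simp: set_Pi_pmf PiE_dflt_def PiE_def extensional_def Pi_def)
  have finE: "finite (PiE (UNIV::'a set) (\<lambda>x. set_pmf (p x)))"
    by (intro finite_PiE) (auto simp: fin)
  have "measure_pmf.expectation (Pi_pmf UNIV dflt p) (\<lambda>\<omega>. \<Prod>x\<in>UNIV. f x (\<omega> x))
      = (\<Sum>g\<in>PiE UNIV (\<lambda>x. set_pmf (p x)). pmf (Pi_pmf UNIV dflt p) g *\<^sub>R (\<Prod>x\<in>UNIV. f x (g x)))"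
    by (rule integral_measure_pmf[OF finE]) (auto simp: set[symmetric])
  also have "\<dots> = (\<Sum>g\<in>PiE UNIV (\<lambda>x. set_pmf (p x)). \<Prod>x\<in>UNIV. pmf (p x) (g x) * f x (g x))"
    by (intro sum.cong refl) (simp add: pmf_Pi prod.distrib)
  also have "\<dots> = (\<Prod>x\<in>UNIV. \<Sum>y\<in>set_pmf (p x). pmf (p x) y * f x y)"
    by (rule prod_sum_PiE[symmetric]) (auto simp: fin)
  also have "\<dots> = (\<Prod>x\<in>UNIV. measure_pmf.expectation (p x) (f x))"
    by (intro prod.cong refl) (subst integral_measure_pmf[OF fin], auto)
  finally show ?thesis .
qed

lemma good_rev: "good k T1 T2 T3 T4 \<longleftrightarrow> good k T4 T3 T2 T1"
  unfolding good_def by blast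

theorem lemma13:
  fixes \<nu> :: "(real \<times> bool) pmf" and X :: "nat \<Rightarrow> real \<times> bool \<Rightarrow> real"
    and k :: nat and S :: "nat \<Rightarrow> (bit^'n) set"
  assumes "BMS_channel \<nu>"
    and "k = card (set_pmf \<nu>)"
    and "\<forall>i<k. \<forall>j<k. measure_pmf.expectation \<nu> (\<lambda>p. X i p * X j p) = (if i = j then 1 else 0)"
    and "X 0 = (\<lambda>_. 1)"
    and "\<forall>i\<in>{1..<k}. \<forall>j\<in>{1..<k}. i \<noteq> j \<longrightarrow> S i \<inter> S j = {}"
  defines "d \<equiv> vec.dim (\<Union>i\<in>{1..<k}. S i)"
    and "m \<equiv> CARD('n)"
    and "B \<equiv> Max {\<bar>X i p\<bar> | i p. i < k \<and> p \<in> set_pmf \<nu>}"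
  shows "avg \<nu> (\<lambda>\<omega>. (chi_orbit X k S \<omega>) ^ 4) \<le> (2::real) ^ (2*d*m + 8*d^2) * B ^ (2^(d+2))"
proof -
  let ?M = "Pi_pmf (UNIV :: (bit^'n) set) undefined (\<lambda>_. \<nu>)"
  define Orb where "Orb = orbit k S"
  define U where "U = (\<Union>i\<in>{1..<k}. S i)"
  have X0: "X 0 = (\<lambda>_. 1)" by (rule assms(4))
  obtain \<mu> :: "real pmf" where mu: "finite (set_pmf \<mu>)"
    "\<nu> = bind_pmf \<mu> (\<lambda>e. map_pmf (\<lambda>z. (e, z)) (bernoulli_pmf e))"
    using assms(1) unfolding BMS_channel_def by blast
  have sub\<nu>: "set_pmf \<nu> \<subseteq> set_pmf \<mu> \<times> UNIV" using mu(2) by auto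
  have finnu: "finite (set_pmf \<nu>)" by (rule finite_subset[OF sub\<nu>]) (simp add: mu(1))
  have k0: "0 < k" using assms(2) finnu set_pmf_not_empty[of \<nu>] by (simp add: card_gt_0_iff)
  define Bset where "Bset = {\<bar>X i p\<bar> | i p. i < k \<and> p \<in> set_pmf \<nu>}"
  have "Bset = (\<lambda>(i,p). \<bar>X i p\<bar>) ` ({..<k} \<times> set_pmf \<nu>)" unfolding Bset_def by auto
  then have finB: "finite Bset" using finnu by simp
  have Bge: "\<bar>X i p\<bar> \<le> B" if "i < k" "p \<in> set_pmf \<nu>" for i p
  proof -
    have "\<bar>X i p\<bar> \<in> Bset" unfolding Bset_def using that by blast
    then show ?thesis unfolding B_def Bset_def[symmetric] using finB by (rule Max_ge[rotated])
  qed
  obtain p0 where p0: "p0 \<in> set_pmf \<nu>" using set_pmf_not_empty[of \<nu>] by blast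
  have B1: "1 \<le> B" using Bge[OF k0 p0] X0 by simp
  have finM: "finite (set_pmf ?M)" by (simp add: set_Pi_pmf finnu finite_PiE_dflt)
  have intM: "integrable (measure_pmf ?M) f" for f :: "_ \<Rightarrow> real" by (rule integrable_measure_pmf_finite[OF finM])
  have disjT: "disj k T" if "T \<in> Orb" for T
    using orbit_disj[OF assms(5)] that unfolding Orb_def by blast
  have finO: "finite Orb" unfolding Orb_def by (rule finite_orbit)
  define Q where "Q T1 T2 T3 T4 = avg \<nu> (\<lambda>\<omega>. chiS X k T1 \<omega> * chiS X k T2 \<omega> * chiS X k T3 \<omega> * chiS X k T4 \<omega>)"
    for T1 T2 T3 T4 :: "nat \<Rightarrow> (bit^'n) set"
  have expand: "avg \<nu> (\<lambda>\<omega>. (chi_orbit X k S \<omega>) ^ 4)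
      = (\<Sum>T4\<in>Orb. \<Sum>T3\<in>Orb. \<Sum>T2\<in>Orb. \<Sum>T1\<in>Orb. Q T1 T2 T3 T4)"
  proof -
    have "(\<lambda>\<omega>. (chi_orbit X k S \<omega>) ^ 4) = (\<lambda>\<omega>. \<Sum>T4\<in>Orb. \<Sum>T3\<in>Orb. \<Sum>T2\<in>Orb. \<Sum>T1\<in>Orb.
            chiS X k T1 \<omega> * chiS X k T2 \<omega> * chiS X k T3 \<omega> * chiS X k T4 \<omega>)"
      by (simp add: chi_orbit_def Orb_def power4_eq_xxxx sum_distrib_left sum_distrib_right)
    then show ?thesis by (simp add: avg_def Q_def intM)
  qed
  have zeroX: "measure_pmf.expectation \<nu> (\<lambda>p. X a p) = 0" if "a \<in> {1..<k}" for a
    using assms(3) that X0 by auto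
  have chiL: "chiS X k T \<omega> = (\<Prod>x\<in>UNIV. X (lab k T x) (\<omega> x))" if "T \<in> Orb" for T \<omega>
    by (rule chiS_lab[where X=X and k=k and T=T, OF disjT[OF that] X0])
  have Qfac: "Q T1 T2 T3 T4 = (\<Prod>x\<in>UNIV. measure_pmf.expectation \<nu>
      (\<lambda>p. X (lab k T1 x) p * X (lab k T2 x) p * X (lab k T3 x) p * X (lab k T4 x) p))"
    if T: "T1 \<in> Orb" "T2 \<in> Orb" "T3 \<in> Orb" "T4 \<in> Orb" for T1 T2 T3 T4
  proof -
    have "Q T1 T2 T3 T4 = avg \<nu> (\<lambda>\<omega>. \<Prod>x\<in>UNIV.
        X (lab k T1 x) (\<omega> x) * X (lab k T2 x) (\<omega> x) * X (lab k T3 x) (\<omega> x) * X (lab k T4 x) (\<omega> x))"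
      unfolding Q_def using T by (simp add: chiL prod.distrib)
    also have "\<dots> = (\<Prod>x\<in>UNIV. measure_pmf.expectation \<nu>
      (\<lambda>p. X (lab k T1 x) p * X (lab k T2 x) p * X (lab k T3 x) p * X (lab k T4 x) p))"
      unfolding avg_def by (rule exp_prod_Pi_pmf_signed) (rule finnu)
    finally show ?thesis .
  qed
  have Qzero: "Q T1 T2 T3 T4 = 0"
    if T: "T1 \<in> Orb" "T2 \<in> Orb" "T3 \<in> Orb" "T4 \<in> Orb" and ng: "\<not> good k T1 T2 T3 T4" for T1 T2 T3 T4
  proof -
    let ?f = "\<lambda>x. measure_pmf.expectation \<nu>
      (\<lambda>p. X (lab k T1 x) p * X (lab k T2 x) p * X (lab k T3 x) p * X (lab k T4 x) p)"
    have ls: "lab k T x \<in> {1..<k}" if "T \<in> Orb" "x \<in> supp k T" for T x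
      by (rule lab_supp[OF disjT[OF that(1)] that(2)])
    have "\<exists>x. ?f x = 0"
    proof (cases "supp k T1 \<subseteq> supp k T2 \<union> supp k T3 \<union> supp k T4")
      case False
      then obtain x where "x \<in> supp k T1" "x \<notin> supp k T2" "x \<notin> supp k T3" "x \<notin> supp k T4" by blast
      then have "?f x = 0" using zeroX[OF ls[OF T(1)]] by (simp add: lab_out X0)
      then show ?thesis by blast
    next
      case c1: True
      show ?thesis
      proof (cases "supp k T2 \<subseteq> supp k T1 \<union> supp k T3 \<union> supp k T4")
        case False
        then obtain x where "x \<in> supp k T2" "x \<notin> supp k T1" "x \<notin> supp k T3" "x \<notin> supp k T4" by blast
        then have "?f x = 0" using zeroX[OF ls[OF T(2)]] by (simp add: lab_out X0)
        then show ?thesis by blast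
      next
        case c2: True
        show ?thesis
        proof (cases "supp k T3 \<subseteq> supp k T1 \<union> supp k T2 \<union> supp k T4")
          case False
          then obtain x where "x \<in> supp k T3" "x \<notin> supp k T1" "x \<notin> supp k T2" "x \<notin> supp k T4" by blast
          then have "?f x = 0" using zeroX[OF ls[OF T(3)]] by (simp add: lab_out X0)
          then show ?thesis by blast
        next
          case c3: True
          have "\<not> supp k T4 \<subseteq> supp k T1 \<union> supp k T2 \<union> supp k T3"
            using ng c1 c2 c3 unfolding good_def by blast
          then obtain x where "x \<in> supp k T4" "x \<notin> supp k T1" "x \<notin> supp k T2" "x \<notin> supp k T3" by blast
          then have "?f x = 0" using zeroX[OF ls[OF T(4)]] by (simp add: lab_out X0)
          then show ?thesis by blast
        qed
      qed
    qed
    then show ?thesis unfolding Qfac[OF T] by (intro prod_zero) auto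
  qed
  obtain b where b: "b \<subseteq> U" "vec.independent b" "U \<subseteq> vec.span b" "card b = d"
    using vec.basis_exists unfolding d_def U_def by blast
  have finb: "finite b" using b(2) vec.finiteI_independent by blast
  have cardsupp: "card (supp k T) \<le> 2^d" if "T \<in> Orb" for T
  proof -
    have "card (supp k T) = card (pi_of k S T ` U)"
      using supp_orbit[of T k S] that unfolding Orb_def U_def by simp
    also have "\<dots> \<le> card U" by (rule card_image_le) simp
    also have "\<dots> \<le> card (vec.span b)" by (rule card_mono[OF _ b(3)]) simp
    also have "\<dots> \<le> 2 ^ card b" by (rule card_span_le[OF finb])
    finally show ?thesis using b(4) by simp
  qed
  have Xb: "\<bar>X (lab k T x) p\<bar> \<le> B ^ (if x \<in> supp k T then 1 else 0)"
    if "T \<in> Orb" "p \<in> set_pmf \<nu>" for T x p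
  proof (cases "x \<in> supp k T")
    case True
    then show ?thesis using Bge[OF lab_lt[OF disjT[OF that(1)] k0] that(2)] by simp
  next
    case False
    then show ?thesis by (simp add: lab_out X0)
  qed
  have Qbound: "\<bar>Q T1 T2 T3 T4\<bar> \<le> B ^ (2^(d+2))"
    if T: "T1 \<in> Orb" "T2 \<in> Orb" "T3 \<in> Orb" "T4 \<in> Orb" for T1 T2 T3 T4
  proof -
    define c where "c x = (if x \<in> supp k T1 then 1 else 0) + (if x \<in> supp k T2 then 1 else 0)
       + (if x \<in> supp k T3 then 1 else 0) + (if x \<in> supp k T4 then (1::nat) else 0)" for x
    have fx: "\<bar>measure_pmf.expectation \<nu>
      (\<lambda>p. X (lab k T1 x) p * X (lab k T2 x) p * X (lab k T3 x) p * X (lab k T4 x) p)\<bar> \<le> B ^ c x" for x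
    proof (rule exp_abs_le[OF finnu])
      fix p assume p: "p \<in> set_pmf \<nu>"
      have "\<bar>X (lab k T1 x) p * X (lab k T2 x) p * X (lab k T3 x) p * X (lab k T4 x) p\<bar>
         = \<bar>X (lab k T1 x) p\<bar> * \<bar>X (lab k T2 x) p\<bar> * \<bar>X (lab k T3 x) p\<bar> * \<bar>X (lab k T4 x) p\<bar>"
        by (simp add: abs_mult)
      also have "\<dots> \<le> B ^ (if x \<in> supp k T1 then 1 else 0) * B ^ (if x \<in> supp k T2 then 1 else 0)
          * B ^ (if x \<in> supp k T3 then 1 else 0) * B ^ (if x \<in> supp k T4 then 1 else 0)"
        by (intro mult_mono Xb T p) (use B1 in auto)
      also have "\<dots> = B ^ c x" unfolding c_def by (simp add: power_add)
      finally show "\<bar>X (lab k T1 x) p * X (lab k T2 x) p * X (lab k T3 x) p * X (lab k T4 x) p\<bar> \<le> B ^ c x" .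
    qed
    have sc: "(\<Sum>x\<in>UNIV. c x) \<le> 2^(d+2)"
    proof -
      have cnt: "(\<Sum>x\<in>UNIV. if x \<in> A then 1 else 0) = card A" for A :: "(bit^'n) set"
      proof -
        have "(\<Sum>x\<in>UNIV. if x \<in> A then 1 else 0) = (\<Sum>x\<in>UNIV. (of_bool (x \<in> A) :: nat))"
          by (intro sum.cong) auto
        also have "\<dots> = card A" by simp
        finally show ?thesis .
      qed
      have "(\<Sum>x\<in>UNIV. c x) = card (supp k T1) + card (supp k T2) + card (supp k T3) + card (supp k T4)"
        unfolding c_def by (simp add: sum.distrib cnt)
      also have "\<dots> \<le> 2^d + 2^d + 2^d + 2^d" using cardsupp T by (intro add_mono) auto
      also have "\<dots> = 2^(d+2)" by simp
      finally show ?thesis .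
    qed
    have "\<bar>Q T1 T2 T3 T4\<bar> = (\<Prod>x\<in>UNIV. \<bar>measure_pmf.expectation \<nu>
      (\<lambda>p. X (lab k T1 x) p * X (lab k T2 x) p * X (lab k T3 x) p * X (lab k T4 x) p)\<bar>)"
      unfolding Qfac[OF T] by (rule abs_prod)
    also have "\<dots> \<le> (\<Prod>x\<in>UNIV. B ^ c x)" by (intro prod_mono conjI fx abs_ge_zero)
    also have "\<dots> = B ^ (\<Sum>x\<in>UNIV. c x)" by (simp add: power_sum)
    also have "\<dots> \<le> B ^ (2^(d+2))" by (rule power_increasing[OF sc B1])
    finally show ?thesis .
  qed
  define G where "G = {(T1,T2,T3,T4). T1 \<in> Orb \<and> T2 \<in> Orb \<and> T3 \<in> Orb \<and> T4 \<in> Orb \<and> good k T1 T2 T3 T4}"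
  have cG: "card G \<le> 2^(2*d*m + 8*d^2)"
    unfolding G_def Orb_def d_def m_def by (rule count_good)
  have Geq: "{q\<in>Orb \<times> Orb \<times> Orb \<times> Orb. case q of (T4,T3,T2,T1) \<Rightarrow> good k T1 T2 T3 T4} = G"
    unfolding G_def by (auto, (metis good_rev)+)
  let ?g = "\<lambda>T1 T2 T3 T4. if good k T1 T2 T3 T4 then B ^ (2^(d+2)) else 0"
  have "avg \<nu> (\<lambda>\<omega>. (chi_orbit X k S \<omega>) ^ 4) \<le> (\<Sum>T4\<in>Orb. \<Sum>T3\<in>Orb. \<Sum>T2\<in>Orb. \<Sum>T1\<in>Orb. ?g T1 T2 T3 T4)"
    unfolding expand
  proof (intro sum_mono)
    fix T1 T2 T3 T4 assume T: "T1 \<in> Orb" "T2 \<in> Orb" "T3 \<in> Orb" "T4 \<in> Orb"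
    show "Q T1 T2 T3 T4 \<le> ?g T1 T2 T3 T4"
      using Qzero[OF T] Qbound[OF T] by (cases "good k T1 T2 T3 T4") auto
  qed
  also have "\<dots> = (\<Sum>q\<in>Orb \<times> Orb \<times> Orb \<times> Orb. case q of (T4,T3,T2,T1) \<Rightarrow> ?g T1 T2 T3 T4)"
    by (simp add: sum.cartesian_product)
  also have "\<dots> = (\<Sum>q\<in>Orb \<times> Orb \<times> Orb \<times> Orb. if (case q of (T4,T3,T2,T1) \<Rightarrow> good k T1 T2 T3 T4)
        then B ^ (2^(d+2)) else 0)"
    by (intro sum.cong refl) (auto split: prod.splits)
  also have "\<dots> = (\<Sum>q\<in>{q\<in>Orb \<times> Orb \<times> Orb \<times> Orb. case q of (T4,T3,T2,T1) \<Rightarrow> good k T1 T2 T3 T4}.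
        B ^ (2^(d+2)))"
    by (rule sum.inter_filter[symmetric]) (simp add: finO)
  also have "\<dots> = (\<Sum>q\<in>G. B ^ (2^(d+2)))" using Geq by simp
  also have "\<dots> = real (card G) * B ^ (2^(d+2))" by simp
  also have "\<dots> \<le> (2::real) ^ (2*d*m + 8*d^2) * B ^ (2^(d+2))"
  proof (rule mult_right_mono)
    show "real (card G) \<le> (2::real) ^ (2*d*m + 8*d^2)"
      using cG by (metis of_nat_le_iff of_nat_numeral of_nat_power)
    show "0 \<le> B ^ (2^(d+2))" using B1 by simp
  qed
  finally show ?thesis .
qed


end
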